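(* For every $k\in\mathbb{N}$ and every $a\ge\sqrt{2k+1}$, $$\int_{|x|\ge a}|\phi_k(x)|^2\,dx\le\frac{2^{k+1}}{k!\sqrt{\pi}}\,a^{2k-1}e^{-a^2}.$$
   Context: $\phi_k(x)=\frac{(-1)^k}{\sqrt{2^k k!\sqrt{\pi}}}e^{x^2/2}\frac{d^k}{dx^k}(e^{-x^2})$, $x\in\mathbb{R}$, $k\in\mathbb{N}$, are the one-dimensional Hermite functions. *)

theory Defs
  imports "HOL-Analysis.Analysis"
begin

definition hermite_fun :: "nat \<Rightarrow> real \<Rightarrow> real" where
  "hermite_fun k x =
     (-1) ^ k / sqrt (2 ^ k * fact k * sqrt pi) * exp (x\<^sup>2 / 2)
       * (deriv ^^ k) (\<lambda>t. exp (- t\<^sup>2)) x"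

end

theory Submission
  imports Defs "HOL-Real_Asymp.Real_Asymp"
begin

fun H :: "nat \<Rightarrow> real \<Rightarrow> real" where
  "H 0 x = 1"
| "H (Suc 0) x = 2 * x"
| "H (Suc (Suc n)) x = 2 * x * H (Suc n) x - 2 * real (Suc n) * H n x"

lemma H_deriv: "(H n has_real_derivative 2 * real n * H (n - 1) x) (at x) \<and>
                (H (Suc n) has_real_derivative 2 * real (Suc n) * H n x) (at x)"
proof (induction n arbitrary: x)
  case 0
  show ?case by (auto intro!: derivative_eq_intros)
next
  case (Suc n)
  have d1: "\<And>y. (H (Suc n) has_real_derivative 2 * real (Suc n) * H n y) (at y)" using Suc by blast
  have d0: "\<And>y. (H n has_real_derivative 2 * real n * H (n - 1) y) (at y)" using Suc by blast
  have "((\<lambda>y. 2 * y * H (Suc n) y - 2 * real (Suc n) * H n y) has_real_derivative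
      2 * H (Suc n) x + 2 * x * (2 * real (Suc n) * H n x) - 2 * real (Suc n) * (2 * real n * H (n - 1) x)) (at x)"
    by (auto intro!: derivative_eq_intros d1 d0)
  moreover have "2 * H (Suc n) x + 2 * x * (2 * real (Suc n) * H n x) - 2 * real (Suc n) * (2 * real n * H (n - 1) x)
     = 2 * real (Suc (Suc n)) * H (Suc n) x"
  proof (cases n)
    case 0 then show ?thesis by simp
  next
    case (Suc m) then show ?thesis by (simp add: algebra_simps)
  qed
  moreover have "H (Suc (Suc n)) = (\<lambda>y. 2 * y * H (Suc n) y - 2 * real (Suc n) * H n y)" by auto
  ultimately show ?case using d1 by auto
qed

lemma H_neg: "H n (-x) = (-1)^n * H n x \<and> H (Suc n) (-x) = (-1)^(Suc n) * H (Suc n) x"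
  by (induction n) (auto simp: algebra_simps)

lemma H_bound: "x > 0 \<Longrightarrow> x^2 \<ge> 2 * real j \<Longrightarrow>
   0 < H j x \<and> H j x \<le> (2*x)^j \<and> x * H j x \<le> H (Suc j) x \<and> H (Suc j) x \<le> 2 * x * H j x"
proof (induction j)
  case 0 then show ?case by auto
next
  case (Suc j)
  then have IH: "0 < H j x" "H j x \<le> (2*x)^j" "x * H j x \<le> H (Suc j) x" "H (Suc j) x \<le> 2 * x * H j x"
    by auto
  have xp: "x > 0" using Suc.prems by simp
  have "0 < x * H j x" using xp IH(1) by simp
  then have pos: "0 < H (Suc j) x" using IH(3) by linarith
  have "2*x*H j x \<le> 2*x*(2*x)^j" using IH(2) xp by (intro mult_left_mono) auto
  then have "H (Suc j) x \<le> (2*x)^Suc j" using IH(4) by simp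
  moreover have "x * H (Suc j) x \<ge> x * x * H j x" using IH(3) Suc.prems
    by (metis mult.assoc mult_le_cancel_left_pos)
  moreover have "x * x * H j x \<ge> 2 * real (Suc j) * H j x"
    using Suc.prems IH(1) by (simp add: power2_eq_square mult_right_mono)
  ultimately show ?case using pos IH by (auto simp: algebra_simps)
qed

lemma H_pos_bound: "x > 0 \<Longrightarrow> x^2 \<ge> 2 * real k \<Longrightarrow> \<bar>H k x\<bar> \<le> (2*x)^k"
proof (cases k)
  case 0 then show ?thesis by simp
next
  case (Suc m)
  assume "x > 0" "x^2 \<ge> 2 * real k"
  then have "x^2 \<ge> 2 * real m" using Suc by simp
  from H_bound[OF \<open>x>0\<close> this] have B: "0 < H m x" "H m x \<le> (2*x)^m" "x * H m x \<le> H (Suc m) x" "H (Suc m) x \<le> 2 * x * H m x"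
    by auto
  have "0 < x * H m x" using \<open>x>0\<close> B(1) by simp
  then have pos: "0 < H (Suc m) x" using B(3) by linarith
  have "2*x*H m x \<le> 2*x*(2*x)^m" using B(2) \<open>x>0\<close> by (intro mult_left_mono) auto
  then show ?thesis using B(4) pos Suc by simp
qed

lemma H_abs_bound: "x^2 \<ge> 2 * real k \<Longrightarrow> \<bar>H k x\<bar> \<le> (2*\<bar>x\<bar>)^k"
proof (cases "x > 0")
  case True
  assume "x^2 \<ge> 2 * real k" then show ?thesis using H_pos_bound[OF True] True by simp
next
  case False
  assume a: "x^2 \<ge> 2 * real k"
  show ?thesis
  proof (cases "x = 0")
    case True then show ?thesis using a by (cases k) auto
  next
    case False
    then have "-x > 0" using \<open>\<not> x > 0\<close> by simp
    from H_pos_bound[OF this] a have "\<bar>H k (-x)\<bar> \<le> (2*(-x))^k" by simp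
    then show ?thesis using H_neg[of k x] \<open>-x>0\<close> by (simp add: abs_mult)
  qed
qed

lemma deriv_pow: "(deriv ^^ k) (\<lambda>t. exp (- t\<^sup>2)) = (\<lambda>x. (-1)^k * H k x * exp (- x\<^sup>2))"
proof (induction k)
  case 0 then show ?case by simp
next
  case (Suc k)
  have "\<And>x. ((\<lambda>x. (-1)^k * H k x * exp (- x\<^sup>2)) has_real_derivative
     (-1)^k * (2 * real k * H (k - 1) x) * exp (- x\<^sup>2) + (-1)^k * H k x * (exp (- x\<^sup>2) * (- (2 * x)))) (at x)"
    by (auto intro!: derivative_eq_intros conjunct1[OF H_deriv])
  moreover have "\<And>x. (-1)^k * (2 * real k * H (k - 1) x) * exp (- x\<^sup>2) + (-1)^k * H k x * (exp (- x\<^sup>2) * (- (2 * x)))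
     = (-1)^Suc k * H (Suc k) x * exp (- x\<^sup>2)"
  proof -
    fix x
    show "(-1)^k * (2 * real k * H (k - 1) x) * exp (- x\<^sup>2) + (-1)^k * H k x * (exp (- x\<^sup>2) * (- (2 * x)))
     = (-1)^Suc k * H (Suc k) x * exp (- x\<^sup>2)"
      by (cases k) (auto simp: algebra_simps)
  qed
  ultimately have dd: "\<And>x. deriv (\<lambda>x. (-1)^k * H k x * exp (- x\<^sup>2)) x = (-1)^Suc k * H (Suc k) x * exp (- x\<^sup>2)"
    using DERIV_imp_deriv by metis
  have "(deriv ^^ Suc k) (\<lambda>t. exp (- t\<^sup>2)) = deriv (\<lambda>x. (-1)^k * H k x * exp (- x\<^sup>2))"
    using Suc.IH by simp
  then show ?case using dd by (simp add: fun_eq_iff)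
qed

lemma herm_eq: "hermite_fun k x = H k x * exp (- x\<^sup>2 / 2) / sqrt (2 ^ k * fact k * sqrt pi)"
proof -
  have e: "exp (x\<^sup>2 / 2) * exp (- x\<^sup>2) = exp (- x\<^sup>2 / 2)"
    by (simp add: exp_add[symmetric])
  have m: "(-1::real)^k * (-1)^k = 1" by (simp flip: power_add)
  have "hermite_fun k x = ((-1)^k * (-1)^k) * H k x * (exp (x\<^sup>2 / 2) * exp (- x\<^sup>2)) / sqrt (2 ^ k * fact k * sqrt pi)"
    unfolding hermite_fun_def deriv_pow by (simp add: algebra_simps)
  then show ?thesis unfolding e m by simp
qed

lemma herm_sq: "\<bar>hermite_fun k x\<bar>\<^sup>2 = (H k x)^2 * exp (- x\<^sup>2) / (2 ^ k * fact k * sqrt pi)"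
proof -
  have e0: "exp (- x\<^sup>2 / 2)^2 = exp (real 2 * (- x\<^sup>2 / 2))"
    by (simp only: exp_of_nat_mult)
  have e: "exp (- x\<^sup>2 / 2)^2 = exp (- x\<^sup>2)" unfolding e0 by simp
  have e': "exp (- (x\<^sup>2 / 2))^2 = exp (- x\<^sup>2)" using e by simp
  show ?thesis unfolding herm_eq power2_abs by (simp add: power_mult_distrib power_divide e e')
qed


theorem mainTheorem6:
  fixes k :: nat and a :: real
  assumes "a \<ge> sqrt (2 * real k + 1)"
  shows "(LINT x:{x. \<bar>x\<bar> \<ge> a}|lborel. \<bar>hermite_fun k x\<bar>\<^sup>2)
           \<le> 2 ^ (k + 1) / (fact k * sqrt pi) * a powr (2 * real k - 1) * exp (- a\<^sup>2)"
proof -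
  define c :: real where "c = 2 ^ k * fact k * sqrt pi"
  have cpos: "c > 0" unfolding c_def by simp
  have "1 \<le> sqrt (2 * real k + 1)" by simp
  then have a1: "a \<ge> 1" using assms by linarith
  have a2: "a\<^sup>2 \<ge> 2 * real k + 1"
  proof -
    have "(sqrt (2 * real k + 1))^2 \<le> a^2" using assms by (intro power_mono) auto
    then show ?thesis by simp
  qed
  define f where "f x = 4^k / c * (2 * x powr (2*real k) - (2*real k - 1) * x powr (2*real k - 2)) * exp (-x\<^sup>2)" for x :: real
  define F where "F x = - (4^k / c) * (x powr (2 * real k - 1) * exp (-x\<^sup>2))" for x :: real
  define S where "S = {x::real. \<bar>x\<bar> \<ge> a}"
  have bound: "\<bar>hermite_fun k x\<bar>\<^sup>2 \<le> f x" if "x \<ge> a" for x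
  proof -
    have xp: "x > 0" using that a1 by simp
    have "a^2 \<le> x^2" using that a1 by (intro power_mono) auto
    then have x2: "x\<^sup>2 \<ge> 2 * real k + 1" using a2 by linarith
    have Hb: "\<bar>H k x\<bar> \<le> (2*x)^k" using H_pos_bound[OF xp] x2 by simp
    have H2: "(H k x)^2 \<le> 4^k * x^(2*k)"
    proof -
      have "(H k x)^2 = \<bar>H k x\<bar>^2" by simp
      also have "\<dots> \<le> ((2*x)^k)^2" using Hb by (intro power_mono) auto
      also have "\<dots> = 4^k * x^(2*k)"
      proof -
        have "((2::real)^k)^2 = 4^k" by (induction k) (auto simp: power2_eq_square)
        then show ?thesis by (simp add: power_mult_distrib mult.commute flip: power_mult)
      qed
      finally show ?thesis .
    qed
    have p1: "x powr (2*real k) = x^(2*k)"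
    proof -
      have "2*real k = real (2*k)" by simp
      then show ?thesis using powr_realpow[OF xp, of "2*k"] by simp
    qed
    have p2: "x powr (2*real k - 2) = x^(2*k) / x^2"
      using xp by (simp add: powr_diff p1 powr_realpow flip: of_nat_mult)
    have q: "x^(2*k) \<le> 2 * x powr (2*real k) - (2*real k - 1) * x powr (2*real k - 2)"
    proof -
      have "(2*real k - 1) * (x^(2*k) / x^2) \<le> x^(2*k)"
      proof -
        have "(2*real k - 1) / x^2 \<le> 1" using x2 xp by (simp add: divide_le_eq)
        then have "(2*real k - 1) / x^2 * x^(2*k) \<le> 1 * x^(2*k)"
          by (intro mult_right_mono) (use xp in auto)
        then show ?thesis by simp
      qed
      then show ?thesis unfolding p1 p2 by simp
    qed
    have "\<bar>hermite_fun k x\<bar>\<^sup>2 = (H k x)^2 * exp (- x\<^sup>2) / c" unfolding herm_sq c_def ..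
    also have "\<dots> \<le> 4^k * x^(2*k) * exp (- x\<^sup>2) / c"
      using H2 cpos by (intro divide_right_mono mult_right_mono) auto
    also have "\<dots> \<le> f x"
      unfolding f_def using q cpos by (simp add: divide_right_mono mult_right_mono mult_left_mono)
    finally show ?thesis .
  qed
  have fnn: "0 \<le> f x" if "x \<ge> a" for x
    using order.trans[OF zero_le_power2 bound[OF that]] .
  have bound': "\<bar>hermite_fun k x\<bar>\<^sup>2 \<le> f (-x)" if "-x \<ge> a" for x
  proof -
    have "\<bar>hermite_fun k x\<bar>\<^sup>2 = \<bar>hermite_fun k (-x)\<bar>\<^sup>2"
      unfolding herm_sq H_neg[THEN conjunct1] by (simp add: power_mult_distrib flip: power_mult)
    then show ?thesis using bound[OF that] by simp
  qed
  have fder: "(F has_real_derivative f x) (at x)" if "x \<ge> a" for x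
  proof -
    have xp: "x > 0" using that a1 by simp
    have d1: "((\<lambda>x. x powr (2*real k - 1)) has_real_derivative (2*real k - 1) * x powr (2*real k - 1 - 1)) (at x)"
      by (rule has_real_derivative_powr[OF xp])
    have d: "(F has_real_derivative - (4^k / c) * ((2*real k - 1) * x powr (2*real k - 1 - 1) * exp (-x\<^sup>2)
          + x powr (2 * real k - 1) * (exp (-x\<^sup>2) * (- (2 * x))))) (at x)"
      unfolding F_def[abs_def]
      using xp cpos by (auto intro!: derivative_eq_intros d1)
    have e1: "x powr (2*real k - 1 - 1) = x powr (2*real k - 2)" by simp
    have e2: "x powr (2 * real k - 1) * x = x powr (2*real k)"
      using xp powr_add[of x "2*real k - 1" 1] by simp
    have "- (4^k / c) * ((2*real k - 1) * x powr (2*real k - 1 - 1) * exp (-x\<^sup>2)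
          + x powr (2 * real k - 1) * (exp (-x\<^sup>2) * (- (2 * x)))) = f x"
    proof -
      have g: "\<And>A B P1 P2 E x :: real. - A * (B * P2 * E + P1 * (E * (- (2 * x)))) = A * (2 * (P1 * x) - B * P2) * E"
        by (simp add: algebra_simps)
      show ?thesis unfolding f_def e1 e2[symmetric] by (rule g)
    qed
    with d show ?thesis by simp
  qed
  have lim: "(F \<longlongrightarrow> 0) at_top"
    unfolding F_def by real_asymp
  have fmeas[measurable]: "f \<in> borel_measurable borel" unfolding f_def by measurable
  have I: "(\<integral>\<^sup>+x. ennreal (f x) * indicator {a ..} x \<partial>lborel) = ennreal (0 - F a)"
    by (rule nn_integral_FTC_atLeast[OF fmeas fder fnn lim])
  have I2: "(\<integral>\<^sup>+x. ennreal (f (-x)) * indicator {a ..} (-x) \<partial>lborel) = ennreal (0 - F a)"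
    using nn_integral_real_affine[of "\<lambda>x. ennreal (f x) * indicator {a ..} x" "-1" 0] I by simp
  have "(\<integral>\<^sup>+x. ennreal (indicator S x *\<^sub>R \<bar>hermite_fun k x\<bar>\<^sup>2) \<partial>lborel)
     \<le> (\<integral>\<^sup>+x. ennreal (f x) * indicator {a ..} x + ennreal (f (-x)) * indicator {a ..} (-x) \<partial>lborel)"
  proof (rule nn_integral_mono)
    fix x
    show "ennreal (indicator S x *\<^sub>R \<bar>hermite_fun k x\<bar>\<^sup>2) \<le> ennreal (f x) * indicator {a ..} x + ennreal (f (-x)) * indicator {a ..} (-x)"
    proof (cases "x \<ge> a")
      case True then show ?thesis using bound[OF True] a1 by (auto simp: S_def indicator_def intro: ennreal_leI order.trans[OF _ add_increasing2])
    next
      case False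
      show ?thesis
      proof (cases "-x \<ge> a")
        case True then show ?thesis using bound'[OF True] a1 False by (auto simp: S_def indicator_def intro: ennreal_leI)
      next
        case False2: False
        then show ?thesis using False by (auto simp: S_def indicator_def)
      qed
    qed
  qed
  also have "\<dots> = ennreal (0 - F a) + ennreal (0 - F a)"
    by (subst nn_integral_add) (auto simp: I I2)
  also have "\<dots> = ennreal (2 ^ (k + 1) / (fact k * sqrt pi) * a powr (2 * real k - 1) * exp (- a\<^sup>2))"
  proof -
    have nn: "0 \<le> 0 - F a" unfolding F_def using cpos by simp
    have "ennreal (0 - F a) + ennreal (0 - F a) = ennreal (2 * (0 - F a))"
      using nn by (simp flip: ennreal_plus)
    also have "2 * (0 - F a) = 2 ^ (k + 1) / (fact k * sqrt pi) * a powr (2 * real k - 1) * exp (- a\<^sup>2)"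
    proof -
      have "(4::real)^k = 2^k * 2^k" by (simp flip: power_mult_distrib)
      then show ?thesis unfolding F_def c_def by (simp add: field_simps)
    qed
    finally show ?thesis .
  qed
  finally have N: "(\<integral>\<^sup>+x. ennreal (indicator S x *\<^sub>R \<bar>hermite_fun k x\<bar>\<^sup>2) \<partial>lborel)
     \<le> ennreal (2 ^ (k + 1) / (fact k * sqrt pi) * a powr (2 * real k - 1) * exp (- a\<^sup>2))" .
  show ?thesis
    unfolding set_lebesgue_integral_def S_def[symmetric]
    by (rule integral_real_bounded[OF _ N]) simp
qed

end
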